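(* Let $\mathscr{A}$ be a $C^*$-algebra. Then the following are equivalent: (i) for all $a,b\in\mathscr{A}$, if $a\perp_B b$ then $\|a+b\|\geq\|b\|$; (ii) $\mathscr{A}$ is isomorphic to $\mathbb{C}$.
   Context: $a\perp_B b$ (Birkhoff--James orthogonality) means $\|a+\lambda b\|\ge\|a\|$ for all $\lambda\in\mathbb{C}$. *)

theory Defs
  imports Complex_Main
begin

text \<open>A (not necessarily unital) complex C*-algebra: a complete normed real algebra
  (associative, submultiplicative norm) carrying a compatible complex scalar
  multiplication and an involution satisfying the C*-identity.\<close>

class cstar_algebra = real_normed_algebra + banach +
  fixes cscale :: "complex \<Rightarrow> 'a \<Rightarrow> 'a"
    and cstar :: "'a \<Rightarrow> 'a"
  assumes scaleR_cscale: "scaleR r x = cscale (complex_of_real r) x"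
    and cscale_add_right: "cscale c (x + y) = cscale c x + cscale c y"
    and cscale_add_left: "cscale (c + d) x = cscale c x + cscale d x"
    and cscale_cscale: "cscale c (cscale d x) = cscale (c * d) x"
    and cscale_one: "cscale 1 x = x"
    and norm_cscale: "norm (cscale c x) = cmod c * norm x"
    and mult_cscale_left: "cscale c x * y = cscale c (x * y)"
    and mult_cscale_right: "x * cscale c y = cscale c (x * y)"
    and cstar_add: "cstar (x + y) = cstar x + cstar y"
    and cstar_cscale: "cstar (cscale c x) = cscale (cnj c) (cstar x)"
    and cstar_mult: "cstar (x * y) = cstar y * cstar x"
    and cstar_cstar: "cstar (cstar x) = x"
    and cstar_identity: "norm (cstar x * x) = (norm x)\<^sup>2"

definition bj_orth :: "'a::cstar_algebra \<Rightarrow> 'a \<Rightarrow> bool" where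
  "bj_orth a b \<longleftrightarrow> (\<forall>l::complex. norm (a + cscale l b) \<ge> norm a)"

definition star_iso_to_complex :: "('a::cstar_algebra \<Rightarrow> complex) \<Rightarrow> bool" where
  "star_iso_to_complex \<phi> \<longleftrightarrow> bij \<phi>
     \<and> (\<forall>x y. \<phi> (x + y) = \<phi> x + \<phi> y)
     \<and> (\<forall>c x. \<phi> (cscale c x) = c * \<phi> x)
     \<and> (\<forall>x y. \<phi> (x * y) = \<phi> x * \<phi> y)
     \<and> (\<forall>x. \<phi> (cstar x) = cnj (\<phi> x))"

end

theory Submission
  imports Defs "HOL-Analysis.Analysis"
begin

lemma cscale_zero_right [simp]: "cscale c (0::'a::cstar_algebra) = 0"
proof -
  have "cscale c (0+0::'a) = cscale c 0 + cscale c 0" by (rule cscale_add_right)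
  thus ?thesis by simp
qed

lemma cscale_zero_left [simp]: "cscale 0 (x::'a::cstar_algebra) = 0"
proof -
  have "cscale (0+0) x = cscale 0 x + cscale 0 x" by (rule cscale_add_left)
  thus ?thesis by simp
qed

lemma cscale_minus_right: "cscale c (- x) = - cscale c (x::'a::cstar_algebra)"
proof -
  have "cscale c (- x) + cscale c x = cscale c (-x + x)" by (rule cscale_add_right[symmetric])
  hence "cscale c (- x) + cscale c x = 0" by simp
  thus ?thesis by (simp add: eq_neg_iff_add_eq_0)
qed

lemma cscale_diff_right: "cscale c (x - y) = cscale c x - cscale c (y::'a::cstar_algebra)"
  unfolding diff_conv_add_uminus by (simp only: cscale_add_right cscale_minus_right)

lemma cscale_minus_left: "cscale (- c) x = - cscale c (x::'a::cstar_algebra)"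
proof -
  have "cscale (- c) x + cscale c x = cscale (-c + c) x" by (rule cscale_add_left[symmetric])
  hence "cscale (- c) x + cscale c x = 0" by simp
  thus ?thesis by (simp add: eq_neg_iff_add_eq_0)
qed

lemma cscale_diff_left: "cscale (c - d) x = cscale c x - cscale d (x::'a::cstar_algebra)"
  unfolding diff_conv_add_uminus by (simp only: cscale_add_left cscale_minus_left)

lemma cscale_real: "cscale (complex_of_real r) x = r *\<^sub>R (x::'a::cstar_algebra)"
  by (simp add: scaleR_cscale)

lemma cscale_ii_ii: "cscale \<i> (cscale \<i> x) = - (x::'a::cstar_algebra)"
  by (simp add: cscale_cscale cscale_minus_left cscale_one)

lemma cstar_zero [simp]: "cstar (0::'a::cstar_algebra) = 0"
proof -
  have "cstar (0+0::'a) = cstar 0 + cstar 0" by (rule cstar_add)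
  thus ?thesis by simp
qed

lemma cstar_minus: "cstar (- x) = - cstar (x::'a::cstar_algebra)"
proof -
  have "cstar (- x) + cstar x = cstar (-x + x)" by (rule cstar_add[symmetric])
  hence "cstar (- x) + cstar x = 0" by simp
  thus ?thesis by (simp add: eq_neg_iff_add_eq_0)
qed

lemma cstar_diff: "cstar (x - y) = cstar x - cstar (y::'a::cstar_algebra)"
  unfolding diff_conv_add_uminus by (simp only: cstar_add cstar_minus)

lemma cstar_scaleR: "cstar (r *\<^sub>R x) = r *\<^sub>R cstar (x::'a::cstar_algebra)"
  by (simp add: scaleR_cscale cstar_cscale)

lemma cstar_ii: "cstar (cscale \<i> x) = - cscale \<i> (cstar (x::'a::cstar_algebra))"
  by (simp add: cstar_cscale cscale_minus_left)

lemma norm_cstar_le: "norm (cstar x) \<ge> norm (x::'a::cstar_algebra)"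
proof (cases "x = 0")
  case True thus ?thesis by simp
next
  case False
  hence pos: "norm x > 0" by simp
  have "(norm x)^2 = norm (cstar x * x)" by (simp add: cstar_identity)
  also have "\<dots> \<le> norm (cstar x) * norm x" by (rule norm_mult_ineq)
  finally have "norm x * norm x \<le> norm (cstar x) * norm x" by (simp add: power2_eq_square)
  thus ?thesis using pos by simp
qed

lemma norm_cstar [simp]: "norm (cstar x) = norm (x::'a::cstar_algebra)"
  by (metis antisym cstar_cstar norm_cstar_le)

lemma cstar_eq_0_iff [simp]: "cstar x = 0 \<longleftrightarrow> (x::'a::cstar_algebra) = 0"
  by (metis cstar_cstar cstar_zero)

lemma sa_sq_norm: "cstar h = h \<Longrightarrow> norm (h * h) = (norm (h::'a::cstar_algebra))^2"
  by (metis cstar_identity)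

fun pw :: "nat \<Rightarrow> 'a::cstar_algebra \<Rightarrow> 'a" where
  "pw 0 h = h"
| "pw (Suc n) h = h * pw n h"

lemma pw_add: "pw (Suc (m + n)) h = pw m h * pw n h"
  by (induction m) (simp_all add: mult.assoc)

lemma pw_comm_gen: "z * h = h * z \<Longrightarrow> z * pw n h = pw n h * z"
proof (induction n)
  case 0 thus ?case by simp
next
  case (Suc n)
  have "z * pw (Suc n) h = (z * h) * pw n h" by (simp add: mult.assoc)
  also have "\<dots> = h * (z * pw n h)" using Suc by (simp add: mult.assoc)
  also have "\<dots> = pw (Suc n) h * z" using Suc by (simp add: mult.assoc)
  finally show ?case .
qed

lemma pw_comm: "pw n h * h = h * pw n h"
  using pw_comm_gen[of h h n] by simp

lemma norm_pw_le: "norm (pw n h) \<le> norm h ^ Suc n"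
proof (induction n)
  case 0 thus ?case by simp
next
  case (Suc n)
  have "norm (pw (Suc n) h) \<le> norm h * norm (pw n h)" by (simp add: norm_mult_ineq)
  also have "\<dots> \<le> norm h * norm h ^ Suc n" using Suc by (simp add: mult_left_mono)
  finally show ?case by simp
qed

lemma pw_sa: "cstar h = h \<Longrightarrow> cstar (pw n h) = pw n h"
proof (induction n)
  case 0 thus ?case by simp
next
  case (Suc n)
  thus ?case by (simp add: cstar_mult pw_comm)
qed

lemma norm_pw_down:
  assumes sa: "cstar h = h" and nh: "norm h = 1" and m: "norm (pw m h) = 1" and jm: "j \<le> m"
  shows "norm (pw j h) = 1"
proof (cases "j = m")
  case True thus ?thesis using m by simp
next
  case False
  then obtain i where mi: "m = Suc (j + i)" using jm by (metis add_Suc_right le_Suc_ex le_neq_implies_less less_imp_Suc_add)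
  have "1 = norm (pw j h * pw i h)" using m mi pw_add by metis
  also have "\<dots> \<le> norm (pw j h) * norm (pw i h)" by (rule norm_mult_ineq)
  also have "\<dots> \<le> norm (pw j h)"
    using norm_pw_le[of i h] nh by (simp add: mult_left_le)
  finally have "1 \<le> norm (pw j h)" .
  moreover have "norm (pw j h) \<le> 1" using norm_pw_le[of j h] nh by simp
  ultimately show ?thesis by simp
qed

lemma norm_pw_sa:
  assumes sa: "cstar h = h" and nh: "norm h = 1"
  shows "norm (pw n h) = 1"
proof (induction n)
  case 0 thus ?case using nh by simp
next
  case (Suc n)
  have "norm (pw (Suc (n + n)) h) = norm (pw n h * pw n h)" by (simp only: pw_add)
  also have "\<dots> = (norm (pw n h))^2" using sa_sq_norm[OF pw_sa[OF sa]] by simp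
  finally have "norm (pw (Suc (n + n)) h) = 1" using Suc by simp
  thus ?case by (rule norm_pw_down[OF sa nh]) simp
qed

section \<open>Square root construction\<close>

primrec sqi :: "'a::cstar_algebra \<Rightarrow> nat \<Rightarrow> 'a" where
  "sqi h 0 = 0"
| "sqi h (Suc n) = (1/2) *\<^sub>R (h * h + sqi h n * sqi h n)"

declare sqi.simps(2)[simp del]

primrec scs :: "nat \<Rightarrow> real" where
  "scs 0 = 0"
| "scs (Suc n) = (1 + (scs n)^2) / 2"

lemma scs_bounds: "0 \<le> scs n \<and> scs n \<le> 1"
proof (induction n)
  case 0 thus ?case by simp
next
  case (Suc n)
  hence "(scs n)^2 \<le> 1" by (simp add: power_le_one)
  thus ?case by simp
qed

lemma scs_mono: "scs n \<le> scs (Suc n)"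
proof (induction n)
  case 0 thus ?case by simp
next
  case (Suc n)
  have "(scs n)^2 \<le> (scs (Suc n))^2"
    using Suc scs_bounds[of n] by (simp add: power_mono)
  thus ?case by simp
qed

lemma sqi_comm: "z * h = h * z \<Longrightarrow> z * sqi h n = sqi h n * z"
proof (induction n)
  case 0 thus ?case by simp
next
  case (Suc n)
  have a: "z * (h * h) = (h * h) * z" using Suc.prems by (metis mult.assoc)
  have b: "z * (sqi h n * sqi h n) = (sqi h n * sqi h n) * z" using Suc by (metis mult.assoc)
  show ?case using a b by (simp add: sqi.simps distrib_left distrib_right)
qed

lemma sqi_comm_h: "h * sqi h n = sqi h n * h"
  by (rule sqi_comm) simp

lemma sqi_comm2: "sqi h m * sqi h n = sqi h n * sqi h m"
  by (rule sqi_comm[OF sqi_comm_h[symmetric]])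

lemma sqi_sa: "cstar h = h \<Longrightarrow> cstar (sqi h n) = sqi h n"
  by (induction n) (simp_all add: sqi.simps cstar_scaleR cstar_add cstar_mult)

lemma sqi_bounds:
  assumes nh: "norm h \<le> 1"
  shows "norm (sqi h n) \<le> scs n \<and> norm (sqi h (Suc n) - sqi h n) \<le> scs (Suc n) - scs n"
proof (induction n)
  case 0
  have "norm (h * h) \<le> 1" using nh norm_mult_ineq[of h h]
    by (meson mult_le_one norm_ge_zero order_trans)
  thus ?case by (simp add: sqi.simps)
next
  case (Suc n)
  let ?X = "sqi h (Suc n)" and ?Y = "sqi h n"
  have nY: "norm ?Y \<le> scs n" using Suc by simp
  have d: "norm (?X - ?Y) \<le> scs (Suc n) - scs n" using Suc by simp
  have "norm ?X \<le> norm (?X - ?Y) + norm ?Y" by (metis diff_add_cancel norm_triangle_ineq)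
  hence nX: "norm ?X \<le> scs (Suc n)" using nY d by linarith
  have eq: "sqi h (Suc (Suc n)) - ?X = (1/2) *\<^sub>R ((?X - ?Y) * (?X + ?Y))"
  proof -
    have "(?X - ?Y) * (?X + ?Y) = ?X * ?X - ?Y * ?Y"
      using sqi_comm2[of h "Suc n" n] by (simp add: algebra_simps)
    moreover have "sqi h (Suc (Suc n)) - ?X = (1/2) *\<^sub>R (?X * ?X - ?Y * ?Y)"
      by (simp only: sqi.simps(2)) (simp add: algebra_simps)
    ultimately show ?thesis by simp
  qed
  have "norm ((?X - ?Y) * (?X + ?Y)) \<le> norm (?X - ?Y) * norm (?X + ?Y)" by (rule norm_mult_ineq)
  also have "\<dots> \<le> (scs (Suc n) - scs n) * (scs (Suc n) + scs n)"
  proof (rule mult_mono)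
    show "norm (?X + ?Y) \<le> scs (Suc n) + scs n" using nX nY norm_triangle_ineq[of ?X ?Y] by linarith
    show "0 \<le> scs (Suc n) - scs n" using scs_mono[of n] by simp
  qed (use d in auto)
  finally have "norm ((?X - ?Y) * (?X + ?Y)) \<le> (scs (Suc n))^2 - (scs n)^2"
    by (simp add: algebra_simps power2_eq_square)
  hence "norm (sqi h (Suc (Suc n)) - ?X) \<le> ((scs (Suc n))^2 - (scs n)^2) / 2"
    using eq by simp
  also have "\<dots> = scs (Suc (Suc n)) - scs (Suc n)" by (simp add: field_simps)
  finally show ?case using nX by simp
qed

lemma sqi_cauchy_bound:
  assumes nh: "norm h \<le> 1" and mn: "n \<le> m"
  shows "norm (sqi h m - sqi h n) \<le> scs m - scs n"
  using mn
proof (induction m)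
  case 0 thus ?case by simp
next
  case (Suc m)
  show ?case
  proof (cases "n = Suc m")
    case True thus ?thesis by simp
  next
    case False
    hence "n \<le> m" using Suc.prems by simp
    hence ih: "norm (sqi h m - sqi h n) \<le> scs m - scs n" using Suc.IH by simp
    have "sqi h (Suc m) - sqi h n = (sqi h (Suc m) - sqi h m) + (sqi h m - sqi h n)" by simp
    hence "norm (sqi h (Suc m) - sqi h n) \<le> norm (sqi h (Suc m) - sqi h m) + norm (sqi h m - sqi h n)"
      by (metis norm_triangle_ineq)
    thus ?thesis using ih sqi_bounds[OF nh, of m] by linarith
  qed
qed

lemma scs_convergent: "convergent scs"
proof (rule Bseq_mono_convergent)
  show "Bseq scs" by (rule BseqI'[of _ 1]) (use scs_bounds in simp)
  show "\<forall>m n. m \<le> n \<longrightarrow> scs m \<le> scs n"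
    using lift_Suc_mono_le[of scs, OF scs_mono] by blast
qed

lemma sqi_convergent:
  assumes nh: "norm h \<le> 1"
  shows "convergent (sqi h)"
proof -
  have "Cauchy scs" using scs_convergent by (rule convergent_Cauchy)
  have "Cauchy (sqi h)"
  proof (rule CauchyI)
    fix e :: real assume "0 < e"
    then obtain M where M: "\<forall>m\<ge>M. \<forall>n\<ge>M. norm (scs m - scs n) < e"
      using \<open>Cauchy scs\<close> CauchyD by blast
    show "\<exists>M. \<forall>m\<ge>M. \<forall>n\<ge>M. norm (sqi h m - sqi h n) < e"
    proof (intro exI allI impI)
      fix m n assume "M \<le> m" "M \<le> n"
      show "norm (sqi h m - sqi h n) < e"
      proof (cases "n \<le> m")
        case True
        hence "norm (sqi h m - sqi h n) \<le> scs m - scs n" by (rule sqi_cauchy_bound[OF nh])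
        also have "\<dots> < e" using M \<open>M \<le> m\<close> \<open>M \<le> n\<close> by fastforce
        finally show ?thesis .
      next
        case False
        hence "norm (sqi h n - sqi h m) \<le> scs n - scs m" by (intro sqi_cauchy_bound[OF nh]) simp
        also have "\<dots> < e" using M \<open>M \<le> m\<close> \<open>M \<le> n\<close> by fastforce
        finally show ?thesis by (simp add: norm_minus_commute)
      qed
    qed
  qed
  thus ?thesis by (simp add: Cauchy_convergent_iff)
qed

lemma cstar_tendsto:
  "(f \<longlongrightarrow> (l::'a::cstar_algebra)) F \<Longrightarrow> ((\<lambda>x. cstar (f x)) \<longlongrightarrow> cstar l) F"
proof -
  assume "(f \<longlongrightarrow> l) F"
  hence "((\<lambda>x. f x - l) \<longlongrightarrow> 0) F" by (rule LIM_zero)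
  hence "((\<lambda>x. norm (f x - l)) \<longlongrightarrow> 0) F" by (rule tendsto_norm_zero)
  hence "((\<lambda>x. norm (cstar (f x) - cstar l)) \<longlongrightarrow> 0) F" by (simp flip: cstar_diff)
  hence "((\<lambda>x. cstar (f x) - cstar l) \<longlongrightarrow> 0) F" by (rule tendsto_norm_zero_cancel)
  thus ?thesis by (rule LIM_zero_cancel)
qed

lemma sqrt_exists:
  fixes h :: "'a::cstar_algebra"
  assumes sa: "cstar h = h" and nh: "norm h \<le> 1"
  shows "\<exists>s. s + s = h * h + s * s \<and> cstar s = s \<and> s * h = h * s"
proof -
  obtain s where lim: "sqi h \<longlonglongrightarrow> s" using sqi_convergent[OF nh] by (auto simp: convergent_def)
  have "(\<lambda>n. sqi h (Suc n)) \<longlonglongrightarrow> s" using LIMSEQ_Suc[OF lim] .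
  moreover have "(\<lambda>n. sqi h (Suc n)) \<longlonglongrightarrow> (1/2) *\<^sub>R (h * h + s * s)"
    unfolding sqi.simps(2) by (intro tendsto_intros lim)
  ultimately have eq: "s = (1/2) *\<^sub>R (h * h + s * s)" by (rule LIMSEQ_unique)
  have "s + s = 2 *\<^sub>R s" by (simp add: scaleR_2)
  also have "\<dots> = 2 *\<^sub>R ((1/2) *\<^sub>R (h * h + s * s))" using eq by (rule arg_cong)
  also have "\<dots> = h * h + s * s" by simp
  finally have e1: "s + s = h * h + s * s" .
  have "(\<lambda>n. cstar (sqi h n)) \<longlonglongrightarrow> cstar s" by (rule cstar_tendsto[OF lim])
  hence "sqi h \<longlonglongrightarrow> cstar s" using sqi_sa[OF sa] by simp
  hence e2: "cstar s = s" using lim LIMSEQ_unique by blast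
  have "(\<lambda>n. sqi h n * h) \<longlonglongrightarrow> s * h" by (intro tendsto_intros lim)
  moreover have "(\<lambda>n. sqi h n * h) \<longlonglongrightarrow> h * s"
    unfolding sqi_comm_h[symmetric] by (intro tendsto_intros lim)
  ultimately have e3: "s * h = h * s" by (rule LIMSEQ_unique)
  show ?thesis using e1 e2 e3 by blast
qed

section \<open>The unitary multiplier\<close>

lemma J_mult_left: "cscale \<i> x * y = cscale \<i> (x * (y::'a::cstar_algebra))"
  by (rule mult_cscale_left)
lemma J_mult_right: "x * cscale \<i> y = cscale \<i> (x * (y::'a::cstar_algebra))"
  by (rule mult_cscale_right)

lemma J_scaleR: "cscale c (r *\<^sub>R x) = r *\<^sub>R cscale c (x::'a::cstar_algebra)"
  by (simp add: scaleR_cscale cscale_cscale mult.commute)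

locale usetup =
  fixes h s :: "'a::cstar_algebra"
  assumes h_sa: "cstar h = h" and s_sa: "cstar s = s"
    and sh: "s * h = h * s" and rel: "s + s = h * h + s * s"
begin

definition R :: "'a \<Rightarrow> 'a" where "R w = w - s * w"
definition U :: "'a \<Rightarrow> 'a" where "U w = h * w + cscale \<i> (R w)"

lemma R_add: "R (x + y) = R x + R y" unfolding R_def by (simp add: algebra_simps)
lemma R_diff: "R (x - y) = R x - R y" unfolding R_def by (simp add: algebra_simps)
lemma R_scaleR: "R (r *\<^sub>R x) = r *\<^sub>R R x" unfolding R_def by (simp add: algebra_simps)
lemma R_J: "R (cscale \<i> x) = cscale \<i> (R x)" unfolding R_def by (simp add: cscale_diff_right J_mult_right)
lemma R_h: "R (h * x) = h * R x"
proof -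
  have "s * (h * x) = h * (s * x)" by (metis mult.assoc sh)
  thus ?thesis unfolding R_def by (simp add: right_diff_distrib)
qed

lemma hR_id: "h * (h * w) + R (R w) = w"
proof -
  have r: "R (R w) = w - s * w - s * w + s * (s * w)" unfolding R_def by (simp add: algebra_simps)
  have h2: "h * (h * w) + s * (s * w) = s * w + s * w"
    using rel by (metis distrib_right mult.assoc)
  have "h * (h * w) + R (R w) = (h * (h * w) + s * (s * w)) + w - s * w - s * w"
    unfolding r by (simp add: algebra_simps)
  also have "\<dots> = w" unfolding h2 by simp
  finally show ?thesis .
qed

lemma U_add: "U (x + y) = U x + U y" unfolding U_def by (simp add: R_add distrib_left cscale_add_right)
lemma U_diff: "U (x - y) = U x - U y" unfolding U_def by (simp add: R_diff right_diff_distrib cscale_diff_right)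
lemma U_scaleR: "U (r *\<^sub>R x) = r *\<^sub>R U x" unfolding U_def by (simp add: R_scaleR J_scaleR scaleR_right_distrib)
lemma U_J: "U (cscale \<i> x) = cscale \<i> (U x)" unfolding U_def by (simp add: R_J J_mult_right cscale_add_right)
lemma U_h: "U (h * x) = h * U x" unfolding U_def by (simp add: R_h J_mult_right distrib_left mult.assoc)
lemma U_zero: "U 0 = 0" using U_diff[of 0 0] by simp

lemma U_norm: "norm (U w) = norm w"
proof -
  let ?a = "h * w" and ?b = "R w"
  have cb: "cstar ?b = cstar w - cstar w * s" unfolding R_def by (simp add: cstar_diff cstar_mult s_sa)
  have ca: "cstar ?a = cstar w * h" by (simp add: cstar_mult h_sa)
  have "cstar (U w) * U w = (cstar ?a - cscale \<i> (cstar ?b)) * (?a + cscale \<i> ?b)"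
    unfolding U_def by (simp add: cstar_add cstar_ii)
  also have "\<dots> = (cstar ?a * ?a + cstar ?b * ?b) + cscale \<i> (cstar ?a * ?b - cstar ?b * ?a)"
    by (simp add: algebra_simps J_mult_left J_mult_right cscale_ii_ii cscale_diff_right cscale_add_right)
  also have "cstar ?a * ?b - cstar ?b * ?a = 0"
  proof -
    have "cstar ?a * ?b = cstar w * h * w - cstar w * (h * s) * w"
      unfolding ca R_def by (simp add: algebra_simps)
    moreover have "cstar ?b * ?a = cstar w * h * w - cstar w * (s * h) * w"
      unfolding cb by (simp add: algebra_simps)
    ultimately show ?thesis by (simp add: sh)
  qed
  also have "cstar ?a * ?a + cstar ?b * ?b = cstar w * w"
  proof -
    have "cstar ?b * ?b = (cstar w - cstar w * s) * (w - s * w)" unfolding cb unfolding R_def ..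
    also have "\<dots> = cstar w * (w - s * w - s * w + (s * s) * w)" by (simp add: algebra_simps)
    also have "w - s * w - s * w + (s * s) * w = R (R w)" unfolding R_def by (simp add: algebra_simps)
    finally have "cstar ?a * ?a + cstar ?b * ?b = cstar w * (h * (h * w)) + cstar w * R (R w)"
      unfolding ca by (simp add: mult.assoc)
    also have "\<dots> = cstar w * (h * (h * w) + R (R w))" by (simp add: distrib_left)
    finally show ?thesis by (simp only: hR_id)
  qed
  finally have "cstar (U w) * U w = cstar w * w" by simp
  hence "(norm (U w))^2 = (norm w)^2" by (metis cstar_identity)
  thus ?thesis by (simp add: power2_eq_iff_nonneg)
qed

lemma UU_expand: "U (U v) = h * (h * v) + 2 *\<^sub>R cscale \<i> (h * R v) - R (R v)"
proof -
  have "U (U v) = U (h * v) + cscale \<i> (U (R v))" unfolding U_def[of v] by (simp add: U_add U_J)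
  also have "U (h * v) = h * (h * v) + cscale \<i> (h * R v)" unfolding U_def by (simp add: R_h)
  also have "U (R v) = h * R v + cscale \<i> (R (R v))" unfolding U_def ..
  finally show ?thesis by (simp add: cscale_add_right cscale_ii_ii scaleR_2 algebra_simps)
qed

lemma U_G: "U (U v) + v = 2 *\<^sub>R U (h * v)"
proof -
  have u: "U (h * v) = h * (h * v) + cscale \<i> (h * R v)" unfolding U_def by (simp add: R_h)
  have "U (U v) + v = (h * (h * v) + 2 *\<^sub>R cscale \<i> (h * R v) - R (R v)) + (h * (h * v) + R (R v))"
    by (simp only: UU_expand hR_id)
  also have "\<dots> = 2 *\<^sub>R (h * (h * v) + cscale \<i> (h * R v))"
    by (simp add: scaleR_2 algebra_simps)
  finally show ?thesis by (simp only: u)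
qed

lemma U_base: "U (U w) - w = 2 *\<^sub>R cscale \<i> (U (R w))"
proof -
  have "U (R w) = h * R w + cscale \<i> (R (R w))" unfolding U_def ..
  hence u: "cscale \<i> (U (R w)) = cscale \<i> (h * R w) - R (R w)"
    by (simp add: cscale_add_right cscale_ii_ii)
  have "U (U w) - w = (h * (h * w) + 2 *\<^sub>R cscale \<i> (h * R w) - R (R w)) - (h * (h * w) + R (R w))"
    by (simp only: UU_expand hR_id)
  also have "\<dots> = 2 *\<^sub>R (cscale \<i> (h * R w) - R (R w))"
    by (simp add: scaleR_2 algebra_simps)
  finally show ?thesis by (simp only: u)
qed

end

primrec Qs :: "('a::cstar_algebra \<Rightarrow> 'a) \<Rightarrow> nat \<Rightarrow> 'a \<Rightarrow> 'a" where
  "Qs f 0 w = f (f w) - w"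
| "Qs f (Suc n) w = f (f (Qs f n w)) + Qs f n w"

fun dd :: "nat \<Rightarrow> nat \<Rightarrow> real" where
  "dd n 0 = -1"
| "dd n (Suc j) = real (n choose j) - real (n choose Suc j)"

lemma dd_rec: "dd (Suc n) (Suc j) = dd n j + dd n (Suc j)"
proof (cases j)
  case 0 thus ?thesis by simp
next
  case (Suc i)
  thus ?thesis by (simp add: binomial_Suc_Suc)
qed

lemma dd_zero: "n + 1 < j \<Longrightarrow> dd n j = 0"
  by (cases j) (simp_all add: binomial_eq_0)

context usetup
begin

lemma Uiter_norm: "norm ((U^^k) z) = norm z"
  by (induction k) (simp_all add: U_norm)

lemma Uiter_h: "(U^^k) (h * z) = h * (U^^k) z"
  by (induction k) (simp_all add: U_h)

lemma Uiter_scaleR: "(U^^k) (r *\<^sub>R z) = r *\<^sub>R (U^^k) z"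
  by (induction k) (simp_all add: U_scaleR)

lemma Uiter_J: "(U^^k) (cscale \<i> z) = cscale \<i> ((U^^k) z)"
  by (induction k) (simp_all add: U_J)

lemma Q_eq: "Qs U n w = (2^(Suc n)) *\<^sub>R cscale \<i> ((U^^(Suc n)) ((((*) h)^^n) (R w)))"
proof (induction n)
  case 0
  show ?case using U_base by simp
next
  case (Suc n)
  let ?X = "(U^^(Suc n)) ((((*) h)^^n) (R w))"
  let ?c = "(2::real)^(Suc n)"
  have "Qs U (Suc n) w = 2 *\<^sub>R U (h * Qs U n w)" by (simp add: U_G)
  also have "h * Qs U n w = ?c *\<^sub>R cscale \<i> (h * ?X)"
    unfolding Suc by (simp add: J_mult_right)
  also have "h * ?X = (U^^(Suc n)) (h * (((*) h)^^n) (R w))"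
    by (rule Uiter_h[symmetric])
  also have "h * (((*) h)^^n) (R w) = (((*) h)^^(Suc n)) (R w)" by simp
  also have "U (?c *\<^sub>R cscale \<i> ((U^^(Suc n)) ((((*) h)^^(Suc n)) (R w))))
      = ?c *\<^sub>R cscale \<i> ((U^^(Suc (Suc n))) ((((*) h)^^(Suc n)) (R w)))"
    by (simp add: U_scaleR U_J)
  finally show ?case by simp
qed

lemma norm_Q_eq: "norm ((((*) h)^^n) (R w)) = norm (Qs U n w) / 2^(Suc n)"
proof -
  have "norm ((U^^(Suc n)) ((((*) h)^^n) (R w))) = norm ((((*) h)^^n) (R w))" by (rule Uiter_norm)
  thus ?thesis unfolding Q_eq by (simp only: norm_scaleR norm_cscale) simp
qed

definition VV :: "'a \<Rightarrow> 'a" where "VV x = U (U x)"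

lemma VV_sum: "VV (\<Sum>j\<in>A. f j) = (\<Sum>j\<in>A. VV (f j))"
proof (induction A rule: infinite_finite_induct)
  case (infinite A) thus ?case by (simp add: VV_def U_zero)
next
  case empty thus ?case by (simp add: VV_def U_zero)
next
  case (insert x F) thus ?case by (simp add: VV_def U_add)
qed

lemma VV_scaleR: "VV (r *\<^sub>R x) = r *\<^sub>R VV x" by (simp add: VV_def U_scaleR)

lemma VViter_norm: "norm ((VV^^k) z) = norm z"
  by (induction k) (simp_all add: VV_def U_norm)

lemma Q_sum: "Qs U n w = (\<Sum>j\<le>Suc n. dd n j *\<^sub>R (VV^^j) w)"
proof (induction n)
  case 0
  show ?case by (simp add: VV_def)
next
  case (Suc n)
  let ?f = "\<lambda>j. dd n j *\<^sub>R (VV^^j) w"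
  let ?g = "\<lambda>j. dd n j *\<^sub>R (VV^^(Suc j)) w"
  have e1: "VV (Qs U n w) = (\<Sum>j\<le>Suc n. ?g j)"
  proof -
    have "VV (Qs U n w) = (\<Sum>j\<le>Suc n. VV (dd n j *\<^sub>R (VV^^j) w))"
      by (simp only: Suc VV_sum)
    also have "\<dots> = (\<Sum>j\<le>Suc n. ?g j)"
      by (simp only: VV_scaleR funpow.simps comp_def)
    finally show ?thesis .
  qed
  have e2: "Qs U n w = ?f 0 + (\<Sum>j\<le>Suc n. ?f (Suc j))"
  proof -
    have "Qs U n w = ?f 0 + (\<Sum>j\<le>n. ?f (Suc j))"
      by (simp only: Suc sum.atMost_Suc_shift)
    also have "(\<Sum>j\<le>n. ?f (Suc j)) = (\<Sum>j\<le>Suc n. ?f (Suc j))"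
      using dd_zero[of n "Suc (Suc n)"] by simp
    finally show ?thesis .
  qed
  have "Qs U (Suc n) w = VV (Qs U n w) + Qs U n w" by (simp add: VV_def)
  also have "\<dots> = ?f 0 + ((\<Sum>j\<le>Suc n. ?g j) + (\<Sum>j\<le>Suc n. ?f (Suc j)))"
    unfolding e1 by (subst e2) (simp only: add_ac)
  also have "(\<Sum>j\<le>Suc n. ?g j) + (\<Sum>j\<le>Suc n. ?f (Suc j))
      = (\<Sum>j\<le>Suc n. dd (Suc n) (Suc j) *\<^sub>R (VV^^(Suc j)) w)"
    by (simp only: sum.distrib[symmetric] dd_rec scaleR_add_left)
  also have "?f 0 = dd (Suc n) 0 *\<^sub>R (VV^^0) w" by simp
  also have "dd (Suc n) 0 *\<^sub>R (VV^^0) w + (\<Sum>j\<le>Suc n. dd (Suc n) (Suc j) *\<^sub>R (VV^^(Suc j)) w)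
      = (\<Sum>j\<le>Suc (Suc n). dd (Suc n) j *\<^sub>R (VV^^j) w)"
    by (rule sum.atMost_Suc_shift[symmetric])
  finally show ?case .
qed

end

lemma binom_up: "i < n div 2 \<Longrightarrow> real (n choose i) \<le> real (n choose Suc i)"
  by (simp add: binomial_mono)

lemma binom_down: "n div 2 \<le> i \<Longrightarrow> real (n choose Suc i) \<le> real (n choose i)"
proof (cases "Suc i \<le> n")
  case True
  assume "n div 2 \<le> i"
  thus ?thesis using True by (simp add: binomial_antimono)
next
  case False
  thus ?thesis by (simp add: binomial_eq_0)
qed

lemma tv_binom:
  "1 + (\<Sum>i<N. \<bar>real (n choose i) - real (n choose Suc i)\<bar>)
     = (if N \<le> n div 2 then real (n choose N) else 2 * real (n choose (n div 2)) - real (n choose N))"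
proof (induction N)
  case 0 thus ?case by simp
next
  case (Suc N)
  show ?case
  proof (cases "Suc N \<le> n div 2")
    case True
    hence "\<bar>real (n choose N) - real (n choose Suc N)\<bar> = real (n choose Suc N) - real (n choose N)"
      using binom_up[of N n] by simp
    thus ?thesis using Suc True by simp
  next
    case False
    hence d: "\<bar>real (n choose N) - real (n choose Suc N)\<bar> = real (n choose N) - real (n choose Suc N)"
      using binom_down[of n N] by simp
    show ?thesis
    proof (cases "N \<le> n div 2")
      case True
      hence "N = n div 2" using False by simp
      thus ?thesis using Suc d False by simp
    next
      case False2: False
      thus ?thesis using Suc d False by simp
    qed
  qed
qed

lemma sum_abs_dd: "(\<Sum>j\<le>Suc n. \<bar>dd n j\<bar>) = 2 * real (n choose (n div 2))"
proof -
  have "(\<Sum>j\<le>Suc n. \<bar>dd n j\<bar>) = \<bar>dd n 0\<bar> + (\<Sum>j\<le>n. \<bar>dd n (Suc j)\<bar>)"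
    by (rule sum.atMost_Suc_shift)
  also have "\<dots> = 1 + (\<Sum>i<Suc n. \<bar>real (n choose i) - real (n choose Suc i)\<bar>)"
    by (simp add: lessThan_Suc_atMost)
  also have "\<dots> = 2 * real (n choose (n div 2))"
    by (subst tv_binom) (simp add: binomial_eq_0)
  finally show ?thesis .
qed

lemma central_binom_bound: "(real ((2*K) choose K))^2 * (2 * real K + 1) \<le> 16^K"
proof (induction K)
  case 0 thus ?case by simp
next
  case (Suc K)
  let ?c = "real ((2*K) choose K)" and ?c' = "real ((2 * Suc K) choose Suc K)"
  have r1: "Suc K * ((Suc (Suc (2*K))) choose Suc K) = Suc (Suc (2*K)) * ((Suc (2*K)) choose K)"
    by (rule Suc_times_binomial)
  have r2: "Suc K * ((Suc (2*K)) choose Suc K) = Suc (2*K) * ((2*K) choose K)"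
    by (rule Suc_times_binomial)
  have sym: "(Suc (2*K)) choose K = (Suc (2*K)) choose Suc K"
    using binomial_symmetric[of K "Suc (2*K)"] by simp
  have tk: "2 * Suc K = Suc (Suc (2*K))" by simp
  have a: "real (Suc K) * ?c' = real (Suc (Suc (2*K))) * real ((Suc (2*K)) choose K)"
    unfolding tk using arg_cong[OF r1, of real] by (simp only: of_nat_mult)
  have b: "real (Suc K) * real ((Suc (2*K)) choose K) = real (Suc (2*K)) * ?c"
    unfolding sym using arg_cong[OF r2, of real] by (simp only: of_nat_mult)
  have "real (Suc K) * ?c' = 2 * (2 * real K + 1) * ?c"
  proof -
    have "real (Suc K) * (real (Suc K) * ?c') = real (Suc (Suc (2*K))) * (real (Suc K) * real ((Suc (2*K)) choose K))"
      unfolding a by (simp add: algebra_simps)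
    also have "\<dots> = real (Suc (Suc (2*K))) * (real (Suc (2*K)) * ?c)" unfolding b ..
    also have "\<dots> = real (Suc K) * (2 * (2 * real K + 1) * ?c)" by (simp add: algebra_simps)
    finally show ?thesis by simp
  qed
  hence c': "?c' = 2 * (2 * real K + 1) / (real K + 1) * ?c" by (simp add: field_simps)
  have "?c'^2 * (2 * real (Suc K) + 1) = 4 * (2 * real K + 1) * (2 * real K + 3) / (real K + 1)^2 * (?c^2 * (2 * real K + 1))"
    unfolding c' by (simp add: field_simps power2_eq_square)
  also have "\<dots> \<le> 4 * (2 * real K + 1) * (2 * real K + 3) / (real K + 1)^2 * 16^K"
    by (rule mult_left_mono[OF Suc]) simp
  also have "\<dots> \<le> 16 * 16^K"
  proof -
    have pos: "(real K + 1)^2 > 0" by simp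
    have "4 * (2 * real K + 1) * (2 * real K + 3) \<le> 16 * (real K + 1)^2"
      by (simp add: power2_eq_square algebra_simps)
    hence "4 * (2 * real K + 1) * (2 * real K + 3) / (real K + 1)^2 \<le> 16"
      by (simp only: pos_divide_le_eq[OF pos])
    thus ?thesis by (rule mult_right_mono) simp
  qed
  finally show ?case by simp
qed

context usetup
begin

lemma norm_Q_le: "norm (Qs U n w) \<le> 2 * real (n choose (n div 2)) * norm w"
proof -
  have "norm (Qs U n w) \<le> (\<Sum>j\<le>Suc n. norm (dd n j *\<^sub>R (VV^^j) w))"
    unfolding Q_sum by (rule norm_sum)
  also have "\<dots> = (\<Sum>j\<le>Suc n. \<bar>dd n j\<bar>) * norm w"
    by (simp only: norm_scaleR VViter_norm real_norm_def sum_distrib_right)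
  finally show ?thesis by (simp only: sum_abs_dd)
qed

lemma hpow_R_bound: "norm ((((*) h)^^n) (R w)) \<le> real (n choose (n div 2)) / 2^n * norm w"
  using norm_Q_le[of n w] by (simp add: norm_Q_eq field_simps)

end

section \<open>Almost orthogonal self-adjoint pairs\<close>

lemma norm_pw_le1: "norm (Y::'a::cstar_algebra) \<le> 1 \<Longrightarrow> norm (pw k Y) \<le> 1"
  by (meson norm_ge_zero norm_pw_le order_trans power_le_one)

lemma cross_small:
  fixes X Y :: "'a::cstar_algebra"
  assumes XY: "norm (X * Y) \<le> e" and nY: "norm Y \<le> 1"
  shows "norm (X * pw n Y) \<le> e"
proof -
  have e0: "0 \<le> e" using XY norm_ge_zero[of "X * Y"] by linarith
  show ?thesis
proof (cases n)
  case 0 thus ?thesis using XY by simp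
next
  case (Suc k)
  have "norm (X * pw n Y) = norm ((X * Y) * pw k Y)" using Suc by (simp add: mult.assoc)
  also have "\<dots> \<le> norm (X * Y) * norm (pw k Y)" by (rule norm_mult_ineq)
  also have "\<dots> \<le> e * 1"
  proof (rule mult_mono)
    show "norm (pw k Y) \<le> 1" using nY by (rule norm_pw_le1)
  qed (use XY e0 in auto)
  finally show ?thesis by simp
qed
qed

lemma pw_expand:
  fixes X Y :: "'a::cstar_algebra"
  assumes com: "X * Y = Y * X" and nX: "norm X \<le> 1" and nY: "norm Y \<le> 1"
    and XY: "norm (X * Y) \<le> e" and A: "0 \<le> A" and B: "0 \<le> B"
  shows "norm (pw n (A *\<^sub>R X + B *\<^sub>R Y) - (A^(Suc n) *\<^sub>R pw n X + B^(Suc n) *\<^sub>R pw n Y))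
           \<le> 2 * real n * e * (A + B)^(Suc n)"
proof (induction n)
  case 0 thus ?case by simp
next
  case (Suc n)
  let ?Z = "A *\<^sub>R X + B *\<^sub>R Y"
  let ?M = "A^(Suc n) *\<^sub>R pw n X + B^(Suc n) *\<^sub>R pw n Y"
  let ?E = "pw n ?Z - ?M"
  let ?S = "A + B"
  have e0: "e \<ge> 0" using XY norm_ge_zero order_trans by blast
  have YX: "norm (Y * X) \<le> e" using XY com by simp
  have "pw (Suc n) ?Z - (A^(Suc (Suc n)) *\<^sub>R pw (Suc n) X + B^(Suc (Suc n)) *\<^sub>R pw (Suc n) Y)
      = (A * B^(Suc n)) *\<^sub>R (X * pw n Y) + (B * A^(Suc n)) *\<^sub>R (Y * pw n X) + ?Z * ?E"
    by (simp add: algebra_simps)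
  also have "norm \<dots> \<le> A * B^(Suc n) * e + B * A^(Suc n) * e + ?S * (2 * real n * e * ?S^(Suc n))"
  proof -
    have n1: "norm ((A * B^(Suc n)) *\<^sub>R (X * pw n Y)) \<le> A * B^(Suc n) * e"
      using cross_small[OF XY nY, of n] A B by (simp add: mult_left_mono)
    have n2: "norm ((B * A^(Suc n)) *\<^sub>R (Y * pw n X)) \<le> B * A^(Suc n) * e"
      using cross_small[OF YX nX, of n] A B by (simp add: mult_left_mono)
    have nZ: "norm ?Z \<le> ?S"
    proof -
      have "norm ?Z \<le> norm (A *\<^sub>R X) + norm (B *\<^sub>R Y)" by (rule norm_triangle_ineq)
      also have "\<dots> \<le> A + B" using A B nX nY by (simp add: add_mono mult_left_le)
      finally show ?thesis .
    qed
    have S0: "0 \<le> ?S" using A B by simp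
    have "norm (?Z * ?E) \<le> norm ?Z * norm ?E" by (rule norm_mult_ineq)
    also have "\<dots> \<le> ?S * (2 * real n * e * ?S^(Suc n))"
      by (rule mult_mono[OF nZ Suc S0 norm_ge_zero])
    finally have n3: "norm (?Z * ?E) \<le> ?S * (2 * real n * e * ?S^(Suc n))" .
    show ?thesis using n1 n2 n3 norm_triangle_ineq[of "(A * B^(Suc n)) *\<^sub>R (X * pw n Y) + (B * A^(Suc n)) *\<^sub>R (Y * pw n X)" "?Z * ?E"]
      norm_triangle_ineq[of "(A * B^(Suc n)) *\<^sub>R (X * pw n Y)" "(B * A^(Suc n)) *\<^sub>R (Y * pw n X)"]
      by linarith
  qed
  also have "\<dots> \<le> 2 * real (Suc n) * e * ?S^(Suc (Suc n))"
  proof -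
    have "A * B^(Suc n) \<le> ?S * ?S^(Suc n)"
      using A B by (intro mult_mono power_mono) auto
    moreover have "B * A^(Suc n) \<le> ?S * ?S^(Suc n)"
      using A B by (intro mult_mono power_mono) auto
    ultimately have "A * B^(Suc n) + B * A^(Suc n) \<le> 2 * ?S^(Suc (Suc n))" by simp
    hence "(A * B^(Suc n) + B * A^(Suc n)) * e \<le> (2 * ?S^(Suc (Suc n))) * e"
      using e0 by (rule mult_right_mono)
    thus ?thesis by (simp add: algebra_simps)
  qed
  finally show ?case .
qed

lemma pw_sq_sa: "cstar Z = Z \<Longrightarrow> norm (pw (Suc (n + n)) Z) = (norm (pw n Z))^2"
  by (simp only: pw_add) (rule sa_sq_norm[OF pw_sa])

lemma pw15_sa: "cstar (Z::'a::cstar_algebra) = Z \<Longrightarrow> norm (pw 15 Z) = (norm Z)^16"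
proof -
  assume sa: "cstar Z = Z"
  have "norm (pw 1 Z) = (norm Z)^2" using pw_sq_sa[OF sa, of 0] by simp
  hence "norm (pw 3 Z) = (norm Z)^4" using pw_sq_sa[OF sa, of 1] by (simp add: numeral_eq_Suc power_mult[symmetric])
  hence "norm (pw 7 Z) = (norm Z)^8" using pw_sq_sa[OF sa, of 3] by (simp add: numeral_eq_Suc power_mult[symmetric])
  hence "norm (pw 15 Z) = (norm Z)^16" using pw_sq_sa[OF sa, of 7] by (simp add: numeral_eq_Suc power_mult[symmetric])
  thus ?thesis .
qed

lemma PB:
  fixes X Y :: "'a::cstar_algebra"
  assumes saX: "cstar X = X" and saY: "cstar Y = Y"
    and com: "X * Y = Y * X" and nX: "norm X \<le> 1" and nY: "norm Y \<le> 1"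
    and XY: "norm (X * Y) \<le> 1/1000000" and A: "0 \<le> A" and B: "0 \<le> B"
    and Am: "A \<le> m" and Bm: "B \<le> m"
  shows "norm (A *\<^sub>R X + B *\<^sub>R Y) \<le> (11/10) * m"
proof -
  let ?Z = "A *\<^sub>R X + B *\<^sub>R Y"
  have m0: "0 \<le> m" using A Am by simp
  have saZ: "cstar ?Z = ?Z" by (simp add: cstar_add cstar_scaleR saX saY)
  have ex: "norm (pw 15 ?Z - (A^16 *\<^sub>R pw 15 X + B^16 *\<^sub>R pw 15 Y)) \<le> 2 * 15 * (1/1000000) * (A+B)^16"
    using pw_expand[OF com nX nY XY A B, of 15] by simp
  have p1: "norm (A^16 *\<^sub>R pw 15 X) \<le> m^16"
  proof -
    have "norm (pw 15 X) \<le> 1" using nX by (rule norm_pw_le1)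
    hence "norm (A^16 *\<^sub>R pw 15 X) \<le> A^16" using A by (simp add: mult_left_le)
    also have "\<dots> \<le> m^16" using A Am by (simp add: power_mono)
    finally show ?thesis .
  qed
  have p2: "norm (B^16 *\<^sub>R pw 15 Y) \<le> m^16"
  proof -
    have "norm (pw 15 Y) \<le> 1" using nY by (rule norm_pw_le1)
    hence "norm (B^16 *\<^sub>R pw 15 Y) \<le> B^16" using B by (simp add: mult_left_le)
    also have "\<dots> \<le> m^16" using B Bm by (simp add: power_mono)
    finally show ?thesis .
  qed
  have p3: "(A+B)^16 \<le> 65536 * m^16"
  proof -
    have "(A+B)^16 \<le> (2*m)^16" using A B Am Bm by (intro power_mono) auto
    thus ?thesis by (simp add: power_mult_distrib)
  qed
  have "norm (pw 15 ?Z) \<le> norm (A^16 *\<^sub>R pw 15 X + B^16 *\<^sub>R pw 15 Y)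
      + norm (pw 15 ?Z - (A^16 *\<^sub>R pw 15 X + B^16 *\<^sub>R pw 15 Y))"
    by (metis add.commute diff_add_cancel norm_triangle_ineq)
  also have "\<dots> \<le> 2 * m^16 + 2 * 15 * (1/1000000) * (65536 * m^16)"
    using ex p1 p2 p3 norm_triangle_ineq[of "A^16 *\<^sub>R pw 15 X" "B^16 *\<^sub>R pw 15 Y"] by linarith
  also have "\<dots> \<le> ((11/10) * m)^16"
  proof -
    have "2 * m^16 + 2 * 15 * (1/1000000) * (65536 * m^16) = (2 + 2 * 15 * (1/1000000) * 65536) * m^16"
      by (simp add: algebra_simps)
    also have "\<dots> \<le> (11/10)^16 * m^16"
      by (rule mult_right_mono) (simp_all add: power_divide m0)
    also have "\<dots> = ((11/10) * m)^16" by (simp only: power_mult_distrib)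
    finally show ?thesis .
  qed
  finally have "(norm ?Z)^16 \<le> ((11/10) * m)^16" using pw15_sa[OF saZ] by simp
  thus ?thesis using m0 power_le_imp_le_base[of "norm ?Z" 15 "(11/10)*m"] by simp
qed

lemma cc_mult: "cscale c x * cscale d y = cscale (c * d) (x * (y::'a::cstar_algebra))"
  by (simp add: mult_cscale_left mult_cscale_right cscale_cscale mult.commute)

lemma comb_star:
  fixes x y :: "'a::cstar_algebra"
  assumes sx: "cstar x = x" and sy: "cstar y = y" and com: "x * y = y * x"
  shows "cstar (cscale \<alpha> x + cscale \<beta> y) * (cscale \<alpha> x + cscale \<beta> y)
     = (cmod \<alpha>)^2 *\<^sub>R (x * x) + (cmod \<beta>)^2 *\<^sub>R (y * y) + (2 * Re (cnj \<alpha> * \<beta>)) *\<^sub>R (x * y)"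
proof -
  have a: "cnj \<alpha> * \<alpha> = complex_of_real ((cmod \<alpha>)^2)"
    by (simp only: mult.commute[of "cnj \<alpha>"] complex_norm_square[symmetric])
  have b: "cnj \<beta> * \<beta> = complex_of_real ((cmod \<beta>)^2)"
    by (simp only: mult.commute[of "cnj \<beta>"] complex_norm_square[symmetric])
  have c: "cnj \<alpha> * \<beta> + cnj \<beta> * \<alpha> = complex_of_real (2 * Re (cnj \<alpha> * \<beta>))"
  proof -
    have "cnj \<beta> * \<alpha> = cnj (cnj \<alpha> * \<beta>)" by simp
    thus ?thesis by (simp only: complex_add_cnj)
  qed
  have "cstar (cscale \<alpha> x + cscale \<beta> y) * (cscale \<alpha> x + cscale \<beta> y)
      = (cscale (cnj \<alpha>) x + cscale (cnj \<beta>) y) * (cscale \<alpha> x + cscale \<beta> y)"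
    by (simp add: cstar_add cstar_cscale sx sy)
  also have "\<dots> = cscale (cnj \<alpha> * \<alpha>) (x * x) + cscale (cnj \<beta> * \<beta>) (y * y)
       + (cscale (cnj \<alpha> * \<beta>) (x * y) + cscale (cnj \<beta> * \<alpha>) (x * y))"
    by (simp only: distrib_left distrib_right cc_mult com[symmetric] add_ac)
  also have "cscale (cnj \<alpha> * \<beta>) (x * y) + cscale (cnj \<beta> * \<alpha>) (x * y) = cscale (cnj \<alpha> * \<beta> + cnj \<beta> * \<alpha>) (x * y)"
    by (rule cscale_add_left[symmetric])
  finally show ?thesis unfolding a b c by (simp only: cscale_real)
qed

lemma ZB:
  fixes x y :: "'a::cstar_algebra"
  assumes sx: "cstar x = x" and sy: "cstar y = y" and com: "x * y = y * x"
    and nx: "norm x \<le> 1" and ny: "norm y \<le> 1" and xy: "norm (x * y) \<le> 1/1000000"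
    and aM: "cmod \<alpha> \<le> M" and bM: "cmod \<beta> \<le> M"
  shows "norm (cscale \<alpha> x + cscale \<beta> y) \<le> (21/20) * M"
proof -
  let ?z = "cscale \<alpha> x + cscale \<beta> y"
  let ?A = "(cmod \<alpha>)^2" and ?B = "(cmod \<beta>)^2" and ?C = "2 * Re (cnj \<alpha> * \<beta>)"
  have M0: "0 \<le> M" using aM norm_ge_zero order_trans by blast
  have XY: "norm ((x * x) * (y * y)) \<le> 1/1000000"
  proof -
    have "(x * x) * (y * y) = x * (x * y) * y" by (simp add: mult.assoc)
    hence "norm ((x * x) * (y * y)) \<le> norm x * norm (x * y) * norm y"
      by (metis norm_mult_ineq mult_right_mono norm_ge_zero order_trans)
    also have "\<dots> \<le> 1 * (1/1000000) * 1"
      by (intro mult_mono) (use nx ny xy in auto)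
    finally show ?thesis by simp
  qed
  have nxx: "norm (x * x) \<le> 1" using sa_sq_norm[OF sx] nx by (simp add: power_le_one)
  have nyy: "norm (y * y) \<le> 1" using sa_sq_norm[OF sy] ny by (simp add: power_le_one)
  have comXY: "(x * x) * (y * y) = (y * y) * (x * x)"
    by (metis com mult.assoc)
  have pb: "norm (?A *\<^sub>R (x * x) + ?B *\<^sub>R (y * y)) \<le> (11/10) * M^2"
    by (rule PB) (use sx sy comXY nxx nyy XY aM bM M0 in \<open>auto simp: cstar_mult power_mono\<close>)
  have C: "\<bar>?C\<bar> \<le> 2 * M^2"
  proof -
    have "\<bar>Re (cnj \<alpha> * \<beta>)\<bar> \<le> cmod (cnj \<alpha> * \<beta>)" by (rule abs_Re_le_cmod)
    also have "\<dots> = cmod \<alpha> * cmod \<beta>" by (simp add: norm_mult)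
    also have "\<dots> \<le> M * M" using aM bM M0 by (intro mult_mono) auto
    finally show ?thesis by (simp add: power2_eq_square)
  qed
  have "(norm ?z)^2 = norm (cstar ?z * ?z)" by (simp add: cstar_identity)
  also have "\<dots> = norm (?A *\<^sub>R (x * x) + ?B *\<^sub>R (y * y) + ?C *\<^sub>R (x * y))"
    by (simp only: comb_star[OF sx sy com])
  also have "\<dots> \<le> norm (?A *\<^sub>R (x * x) + ?B *\<^sub>R (y * y)) + \<bar>?C\<bar> * norm (x * y)"
    using norm_triangle_ineq by (metis norm_scaleR)
  also have "\<dots> \<le> (11/10) * M^2 + 2 * M^2 * (1/1000000)"
    using pb C xy M0 by (intro add_mono mult_mono) auto
  also have "\<dots> = (11/10 + 2/1000000) * M^2" by (simp add: algebra_simps)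
  also have "\<dots> \<le> (21/20)^2 * M^2" by (rule mult_right_mono) (simp_all add: power_divide)
  also have "\<dots> = ((21/20) * M)^2" by (simp only: power_mult_distrib)
  finally have "(norm ?z)^2 \<le> ((21/20) * M)^2" .
  thus ?thesis using M0 by (simp add: power2_le_iff_abs_le)
qed

lemma LB:
  fixes x y :: "'a::cstar_algebra"
  assumes sx: "cstar x = x" and nx: "norm x = 1" and xy: "norm (x * y) \<le> e"
  shows "norm (cscale \<alpha> x + cscale \<beta> y) \<ge> cmod \<alpha> - cmod \<beta> * e"
proof -
  let ?z = "cscale \<alpha> x + cscale \<beta> y"
  have "x * ?z = cscale \<alpha> (x * x) + cscale \<beta> (x * y)"
    by (simp add: distrib_left mult_cscale_right)
  moreover have "norm (cscale \<alpha> (x * x)) = cmod \<alpha>" using sa_sq_norm[OF sx] nx by (simp add: norm_cscale)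
  moreover have "norm (cscale \<beta> (x * y)) \<le> cmod \<beta> * e" using xy by (simp add: norm_cscale mult_left_mono)
  ultimately have "norm (x * ?z) \<ge> cmod \<alpha> - cmod \<beta> * e"
    by (metis add_diff_cancel diff_le_eq norm_triangle_ineq4 order_trans add_le_cancel_left norm_diff_ineq)
  moreover have "norm (x * ?z) \<le> norm ?z" using norm_mult_ineq[of x ?z] nx by simp
  ultimately show ?thesis by linarith
qed

lemma cscale_bounded_linear: "bounded_linear (\<lambda>\<mu>::complex. cscale \<mu> (b::'a::cstar_algebra))"
proof (rule bounded_linear_intro[of _ "norm b"])
  fix x y :: complex
  show "cscale (x + y) b = cscale x b + cscale y b" by (rule cscale_add_left)
next
  fix r :: real and x :: complex
  show "cscale (r *\<^sub>R x) b = r *\<^sub>R cscale x b"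
    by (simp add: scaleR_conv_of_real scaleR_cscale cscale_cscale)
next
  fix x :: complex
  show "norm (cscale x b) \<le> norm x * norm b" by (simp add: norm_cscale)
qed

lemma minimizer:
  fixes a b :: "'a::cstar_algebra"
  assumes b: "b \<noteq> 0"
  shows "\<exists>l. \<forall>\<mu>. norm (a + cscale l b) \<le> norm (a + cscale \<mu> b)"
proof -
  let ?f = "\<lambda>\<mu>. norm (a + cscale \<mu> b)"
  let ?R = "2 * norm a / norm b"
  have nb: "norm b > 0" using b by simp
  have cont: "continuous_on (cball 0 ?R) ?f"
    by (intro continuous_intros bounded_linear.continuous_on[OF cscale_bounded_linear])
  have "?R \<ge> 0" using nb by simp
  hence "0 \<in> cball 0 ?R" by simp
  hence "cball 0 ?R \<noteq> {}" by blast
  then obtain l where lam: "l \<in> cball 0 ?R" and mn: "\<forall>\<mu>\<in>cball 0 ?R. ?f l \<le> ?f \<mu>"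
    using continuous_attains_inf[OF compact_cball _ cont] by blast
  have "?f l \<le> ?f \<mu>" for \<mu>
  proof (cases "\<mu> \<in> cball 0 ?R")
    case True thus ?thesis using mn by blast
  next
    case False
    hence big: "cmod \<mu> > ?R" by (simp add: dist_norm)
    have "?f l \<le> ?f 0" using mn \<open>0 \<in> cball 0 ?R\<close> by blast
    also have "\<dots> = norm a" by simp
    also have "norm a \<le> cmod \<mu> * norm b - norm a"
    proof -
      have "cmod \<mu> * norm b > ?R * norm b" using big nb by (rule mult_strict_right_mono)
      thus ?thesis using nb by simp
    qed
    also have "cmod \<mu> * norm b - norm a \<le> ?f \<mu>"
    proof -
      have "norm (cscale \<mu> b) \<le> norm (a + cscale \<mu> b) + norm a"
        by (metis add_diff_cancel_left' norm_diff_ineq norm_minus_commute diff_le_eq add.commute)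
      thus ?thesis by (simp add: norm_cscale)
    qed
    finally show ?thesis .
  qed
  thus ?thesis by blast
qed

lemma comb_ab:
  fixes x y :: "'a::cstar_algebra"
  shows "(cscale 1 x + cscale 1 y) + cscale \<mu> (cscale (-3) x + cscale 1 y)
         = cscale (1 - 3 * \<mu>) x + cscale (1 + \<mu>) y"
proof -
  have e1: "1 - 3 * \<mu> = 1 + \<mu> * (-3)" by simp
  have e2: "1 + \<mu> = 1 + \<mu> * 1" by simp
  show ?thesis unfolding e1 e2
    by (simp only: cscale_add_right cscale_add_left cscale_cscale add_ac)
qed

lemma lam_small:
  fixes l :: complex and e :: real
  assumes h1: "cmod (1 - 3*l) - cmod (1 + l) * e \<le> 21/20"
    and h2: "cmod (1 + l) - cmod (1 - 3*l) * e \<le> 21/20" and e: "e = 1/1000000"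
  shows "cmod l \<le> 1/5"
proof -
  let ?p = "cmod (1 + l)" and ?q = "cmod (1 - 3*l)" and ?L = "cmod l"
  have pL: "?p \<le> 1 + ?L" using norm_triangle_ineq[of 1 l] by simp
  have qL: "?q \<le> 1 + 3 * ?L" using norm_triangle_ineq4[of 1 "3*l"] by (simp add: norm_mult)
  have Lp: "?L \<le> ?p + 1" using norm_triangle_ineq4[of "1 + l" 1] by simp
  have L2: "?L \<le> 21/10" using h2 Lp qL e by simp
  have p: "?p \<le> 10501/10000" using h2 qL L2 e by simp
  have q: "?q \<le> 10501/10000" using h1 pL L2 e by simp
  have p2: "?p^2 \<le> (10501/10000)^2" using p by (intro power_mono) auto
  have q2: "?q^2 \<le> (10501/10000)^2" using q by (intro power_mono) auto
  have id: "3 * ?p^2 + ?q^2 = 4 + 12 * ?L^2"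
    unfolding cmod_power2 by (simp add: power2_eq_square algebra_simps)
  have c: "(10501/10000::real)^2 = 110271001/100000000" by (simp add: power2_eq_square)
  have "?L^2 \<le> 1/25" using p2 q2 id unfolding c by linarith
  hence "?L^2 \<le> (1/5)^2" by (simp add: power2_eq_square)
  thus ?thesis by (simp add: power2_le_iff_abs_le)
qed

lemma CL:
  fixes x y :: "'a::cstar_algebra"
  assumes bjp: "\<forall>a b::'a. bj_orth a b \<longrightarrow> norm (a + b) \<ge> norm b"
    and sx: "cstar x = x" and sy: "cstar y = y" and com: "x * y = y * x"
    and nx: "norm x = 1" and ny: "norm y = 1" and xy: "norm (x * y) \<le> 1/1000000"
  shows False
proof -
  define e :: real where "e = 1/1000000"
  have xy': "norm (x * y) \<le> e" using xy e_def by simp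
  have yx': "norm (y * x) \<le> e" using xy' com by simp
  define a where "a = cscale 1 x + cscale 1 y"
  define b where "b = cscale (-3) x + cscale 1 y"
  have comb: "a + cscale \<mu> b = cscale (1 - 3 * \<mu>) x + cscale (1 + \<mu>) y" for \<mu>
    unfolding a_def b_def by (rule comb_ab)
  have nb: "norm b \<ge> 3 - e"
    using LB[OF sx nx xy', of "-3" 1] unfolding b_def by simp
  hence "b \<noteq> 0" using e_def by auto
  then obtain l where l: "\<forall>\<mu>. norm (a + cscale l b) \<le> norm (a + cscale \<mu> b)"
    using minimizer by blast
  have orth: "bj_orth (a + cscale l b) b"
    unfolding bj_orth_def
  proof
    fix m :: complex
    have eq: "a + cscale l b + cscale m b = a + cscale (l + m) b" by (simp add: cscale_add_left add.assoc)
    show "norm (a + cscale l b + cscale m b) \<ge> norm (a + cscale l b)" unfolding eq using l by blast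
  qed
  hence big: "norm (a + cscale l b + b) \<ge> norm b" using bjp by blast
  have "a + cscale l b + b = a + cscale (l + 1) b" by (simp add: cscale_add_left cscale_one add.assoc)
  hence big2: "norm (cscale (1 - 3 * (l + 1)) x + cscale (1 + (l + 1)) y) \<ge> 3 - e"
    using big nb comb by simp
  have na: "norm a \<le> 21/20"
  proof -
    have "norm (cscale 1 x + cscale 1 y) \<le> (21/20) * 1"
      by (rule ZB[OF sx sy com]) (use nx ny xy in simp_all)
    thus ?thesis unfolding a_def by simp
  qed
  have "norm (a + cscale l b) \<le> norm (a + cscale 0 b)" using l by blast
  hence nl: "norm (cscale (1 - 3 * l) x + cscale (1 + l) y) \<le> 21/20" using na comb[of l] by simp
  have h1: "cmod (1 - 3 * l) - cmod (1 + l) * e \<le> 21/20"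
    using LB[OF sx nx xy', of "1 - 3 * l" "1 + l"] nl by simp
  have h2: "cmod (1 + l) - cmod (1 - 3 * l) * e \<le> 21/20"
    using LB[OF sy ny yx', of "1 + l" "1 - 3 * l"] nl by (simp add: add.commute)
  have L: "cmod l \<le> 1/5" by (rule lam_small[OF h1 h2 e_def])
  have "norm (cscale (1 - 3 * (l + 1)) x + cscale (1 + (l + 1)) y) \<le> (21/20) * (2 + 3 * cmod l)"
  proof (rule ZB[OF sx sy com])
    show "norm x \<le> 1" "norm y \<le> 1" "norm (x * y) \<le> 1/1000000" using nx ny xy by simp_all
    have "1 - 3 * (l + 1) = - (2 + 3 * l)" by (simp add: algebra_simps)
    hence "cmod (1 - 3 * (l + 1)) = cmod (2 + 3 * l)" by (simp only: norm_minus_cancel)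
    also have "\<dots> \<le> 2 + 3 * cmod l" using norm_triangle_ineq[of 2 "3 * l"] by (simp add: norm_mult)
    finally show "cmod (1 - 3 * (l + 1)) \<le> 2 + 3 * cmod l" .
    have "cmod (1 + (l + 1)) \<le> 2 + cmod l" using norm_triangle_ineq[of 2 l] by (simp add: add_ac)
    thus "cmod (1 + (l + 1)) \<le> 2 + 3 * cmod l" using norm_ge_zero[of l] by linarith
  qed
  hence "3 - e \<le> (21/20) * (2 + 3 * cmod l)" using big2 by linarith
  thus False using L e_def by simp
qed

lemma pw_funpow: "pw k h * w = (((*) h)^^(Suc k)) w"
  by (induction k) (simp_all add: mult.assoc)

lemma small_central:
  fixes d :: real assumes d: "d > 0"
  shows "\<exists>K. K \<ge> 1 \<and> real ((2*K) choose K) / 4^K < d"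
proof -
  obtain K :: nat where K: "(1/d)^2 < real K" using reals_Archimedean2 by blast
  have K1: "K \<ge> 1" using K d by (cases K) (auto simp: power2_eq_square)
  let ?c = "real ((2*K) choose K) / 4^K"
  have c0: "?c \<ge> 0" by simp
  have e16: "((4::real)^K)^2 = 16^K" by (simp add: power2_eq_square power_mult_distrib[symmetric])
  have "(real ((2*K) choose K))^2 * (2 * real K + 1) \<le> (4^K)^2"
    unfolding e16 by (rule central_binom_bound)
  hence "?c^2 * (2 * real K + 1) \<le> 1" by (simp add: power_divide divide_le_eq)
  hence "?c^2 * (1/d)^2 < 1"
  proof -
    assume h: "?c^2 * (2 * real K + 1) \<le> 1"
    show ?thesis
    proof (cases "?c = 0")
      case True thus ?thesis by simp
    next
      case False
      hence "?c^2 > 0" by simp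
      hence "?c^2 * (1/d)^2 < ?c^2 * (2 * real K + 1)" using K by (intro mult_strict_left_mono) auto
      thus ?thesis using h by linarith
    qed
  qed
  hence "(?c / d)^2 < 1^2" by (simp add: power_divide power_mult_distrib)
  hence "?c / d < 1" by (rule power_less_imp_less_base) simp
  thus ?thesis using K1 d by (intro exI[of _ K]) (simp add: divide_less_eq mult.commute)
qed

lemma sa_dichotomy:
  fixes h :: "'a::cstar_algebra"
  assumes bjp: "\<forall>a b::'a. bj_orth a b \<longrightarrow> norm (a + b) \<ge> norm b"
    and sa: "cstar h = h" and nh: "norm h = 1"
  shows "h * h = h \<or> h * h = - h"
proof -
  obtain s where rel: "s + s = h * h + s * s" and ssa: "cstar s = s" and sh: "s * h = h * s"
    using sqrt_exists[OF sa] nh by auto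
  interpret usetup h s using sa ssa sh rel by unfold_locales
  define y0 where "y0 = R h"
  have y0_def': "y0 = h - s * h" unfolding y0_def R_def ..
  have y0sa: "cstar y0 = y0" unfolding y0_def' by (simp add: cstar_diff cstar_mult sa ssa sh)
  have y0zero: "y0 = 0"
  proof (rule ccontr)
    assume "y0 \<noteq> 0"
    hence d: "norm y0 > 0" by simp
    obtain K where K1: "K \<ge> 1" and Kc: "real ((2*K) choose K) / 4^K < norm y0 / 1000000"
      using small_central[of "norm y0 / 1000000"] d by auto
    define x where "x = pw (2*K - 1) h"
    define y where "y = (1 / norm y0) *\<^sub>R y0"
    have xsa: "cstar x = x" unfolding x_def by (rule pw_sa[OF sa])
    have nx: "norm x = 1" unfolding x_def by (rule norm_pw_sa[OF sa nh])
    have ysa: "cstar y = y" unfolding y_def by (simp add: cstar_scaleR y0sa)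
    have ny: "norm y = 1" unfolding y_def using d by simp
    have xs: "x * s = s * x" unfolding x_def using pw_comm_gen[of s h] sh by simp
    have xh: "x * h = h * x" unfolding x_def by (simp add: pw_comm)
    have xy0: "x * y0 = y0 * x"
    proof -
      have "x * y0 = x * h - (x * s) * h" unfolding y0_def' by (simp add: right_diff_distrib mult.assoc)
      also have "\<dots> = h * x - s * (x * h)" by (simp add: xs xh mult.assoc)
      also have "\<dots> = y0 * x" unfolding y0_def' by (simp add: xh left_diff_distrib mult.assoc)
      finally show ?thesis .
    qed
    have com: "x * y = y * x" unfolding y_def using xy0 by simp
    have "x * y0 = (((*) h)^^(2*K)) (R h)"
      unfolding x_def y0_def pw_funpow using K1 by simp
    hence "norm (x * y0) \<le> real ((2*K) choose ((2*K) div 2)) / 2^(2*K) * norm h"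
      using hpow_R_bound[of "2*K" h] by simp
    also have "\<dots> = real ((2*K) choose K) / 4^K" using nh by (simp add: power_mult)
    finally have "norm (x * y0) < norm y0 / 1000000" using Kc by linarith
    hence "norm (x * y) \<le> 1/1000000" unfolding y_def using d by (simp add: divide_simps)
    thus False using CL[OF bjp xsa ysa com nx ny] by simp
  qed
  hence shh: "s * h = h" unfolding y0_def' by simp
  have hhh: "h * (h * h) = h"
  proof -
    have "(s + s) * h = (h * h + s * s) * h" by (simp only: rel)
    hence "h + h = h * h * h + s * (s * h)" by (simp add: distrib_right shh mult.assoc)
    thus ?thesis by (simp add: shh mult.assoc)
  qed
  define p where "p = (1/2) *\<^sub>R (h * h + h)"
  define q where "q = (1/2) *\<^sub>R (h * h - h)"
  have psa: "cstar p = p" unfolding p_def by (simp add: cstar_scaleR cstar_add cstar_mult sa)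
  have qsa: "cstar q = q" unfolding q_def by (simp add: cstar_scaleR cstar_diff cstar_mult sa)
  have h4: "(h * h) * (h * h) = h * h" using hhh by (simp add: mult.assoc)
  have pq: "p * q = 0"
  proof -
    have "(h * h + h) * (h * h - h) = (h * h) * (h * h) - h * (h * h) + h * (h * h) - h * h"
      by (simp add: algebra_simps)
    also have "\<dots> = 0" using h4 by simp
    finally show ?thesis unfolding p_def q_def by simp
  qed
  have qp: "q * p = 0"
  proof -
    have "(h * h - h) * (h * h + h) = (h * h) * (h * h) + h * (h * h) - h * (h * h) - h * h"
      by (simp add: algebra_simps)
    also have "\<dots> = 0" using h4 by simp
    finally show ?thesis unfolding p_def q_def by simp
  qed
  show ?thesis
  proof (cases "p = 0 \<or> q = 0")
    case True
    thus ?thesis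
    proof
      assume "p = 0"
      hence "h * h + h = 0" unfolding p_def by simp
      thus ?thesis by (simp add: eq_neg_iff_add_eq_0)
    next
      assume "q = 0"
      hence "h * h - h = 0" unfolding q_def by simp
      thus ?thesis by simp
    qed
  next
    case False
    hence np: "norm p > 0" and nq: "norm q > 0" by auto
    define x where "x = (1 / norm p) *\<^sub>R p"
    define y where "y = (1 / norm q) *\<^sub>R q"
    have "x * y = 0" unfolding x_def y_def by (simp add: pq)
    moreover have "y * x = 0" unfolding x_def y_def by (simp add: qp)
    moreover have "cstar x = x" unfolding x_def by (simp add: cstar_scaleR psa)
    moreover have "cstar y = y" unfolding y_def by (simp add: cstar_scaleR qsa)
    moreover have "norm x = 1" unfolding x_def using np by simp
    moreover have "norm y = 1" unfolding y_def using nq by simp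
    ultimately show ?thesis using CL[OF bjp, of x y] by simp
  qed
qed

lemma sa_proj:
  fixes k :: "'a::cstar_algebra"
  assumes bjp: "\<forall>a b::'a. bj_orth a b \<longrightarrow> norm (a + b) \<ge> norm b"
    and sa: "cstar k = k"
  shows "\<exists>c e. e * e = e \<and> cstar e = e \<and> k = c *\<^sub>R e"
proof (cases "k = 0")
  case True thus ?thesis by (intro exI[of _ 0] exI[of _ 0]) simp
next
  case False
  hence nk: "norm k > 0" by simp
  define h where "h = (1 / norm k) *\<^sub>R k"
  have hsa: "cstar h = h" unfolding h_def by (simp add: cstar_scaleR sa)
  have nh: "norm h = 1" unfolding h_def using nk by simp
  have kh: "k = norm k *\<^sub>R h" unfolding h_def using nk by simp
  from sa_dichotomy[OF bjp hsa nh] show ?thesis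
  proof
    assume "h * h = h"
    thus ?thesis using hsa kh by blast
  next
    assume hh: "h * h = - h"
    have "(- h) * (- h) = - h" using hh by simp
    moreover have "cstar (- h) = - h" by (simp add: cstar_minus hsa)
    moreover have "k = (- norm k) *\<^sub>R (- h)" using kh by simp
    ultimately show ?thesis by blast
  qed
qed

lemma proj_uniq:
  fixes p q :: "'a::cstar_algebra"
  assumes bjp: "\<forall>a b::'a. bj_orth a b \<longrightarrow> norm (a + b) \<ge> norm b"
    and pp: "p * p = p" and ps: "cstar p = p" and qq: "q * q = q" and qs: "cstar q = q"
    and p0: "p \<noteq> 0" and q0: "q \<noteq> 0"
  shows "p = q"
proof -
  have sq: "\<exists>c. w * w = c *\<^sub>R w" if wsa: "cstar w = w" for w :: 'a
  proof -
    obtain c e where e: "e * e = e" "w = c *\<^sub>R e" using sa_proj[OF bjp wsa] by blast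
    have "w * w = c *\<^sub>R (c *\<^sub>R (e * e))" using e by simp
    also have "\<dots> = c *\<^sub>R w" using e by simp
    finally show ?thesis by blast
  qed
  have "\<exists>c. (p + q) * (p + q) = c *\<^sub>R (p + q)" by (rule sq) (simp add: cstar_add ps qs)
  then obtain \<alpha> where a: "(p + q) * (p + q) = \<alpha> *\<^sub>R (p + q)" by blast
  have "\<exists>c. (p - q) * (p - q) = c *\<^sub>R (p - q)" by (rule sq) (simp add: cstar_diff ps qs)
  then obtain \<beta> where b: "(p - q) * (p - q) = \<beta> *\<^sub>R (p - q)" by blast
  have e1: "(p + q) * (p + q) = p + q + (p * q + q * p)" by (simp add: algebra_simps pp qq)
  have e2: "(p - q) * (p - q) = p + q - (p * q + q * p)" by (simp add: algebra_simps pp qq)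
  have "(2 - \<alpha> - \<beta>) *\<^sub>R p + (2 - \<alpha> + \<beta>) *\<^sub>R q = 0"
  proof -
    have "(p + q) * (p + q) + (p - q) * (p - q) = 2 *\<^sub>R p + 2 *\<^sub>R q"
      unfolding e1 e2 by (simp add: scaleR_2 algebra_simps)
    hence "\<alpha> *\<^sub>R (p + q) + \<beta> *\<^sub>R (p - q) = 2 *\<^sub>R p + 2 *\<^sub>R q" using a b by simp
    thus ?thesis by (simp add: algebra_simps)
  qed
  note lin = this
  show ?thesis
  proof (cases "2 - \<alpha> + \<beta> = 0")
    case False
    define c where "c = - (2 - \<alpha> - \<beta>) / (2 - \<alpha> + \<beta>)"
    have qc: "q = c *\<^sub>R p"
    proof -
      have "(2 - \<alpha> + \<beta>) *\<^sub>R q = - ((2 - \<alpha> - \<beta>) *\<^sub>R p)"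
        using lin by (simp add: eq_neg_iff_add_eq_0 add.commute)
      also have "\<dots> = (- (2 - \<alpha> - \<beta>)) *\<^sub>R p" by (rule scaleR_minus_left[symmetric])
      also have "- (2 - \<alpha> - \<beta>) = (2 - \<alpha> + \<beta>) * c" unfolding c_def using False by simp
      finally have "(2 - \<alpha> + \<beta>) *\<^sub>R q = (2 - \<alpha> + \<beta>) *\<^sub>R (c *\<^sub>R p)" by simp
      thus ?thesis using False by (simp only: scaleR_cancel_left) simp
    qed
    have "(c * c) *\<^sub>R p = c *\<^sub>R p" using qq qc pp by simp
    hence "(c * c - c) *\<^sub>R p = 0" by (simp add: scaleR_diff_left)
    hence "c * c - c = 0" using p0 by simp
    hence "c * (c - 1) = 0" by (simp add: algebra_simps)
    hence "c = 0 \<or> c = 1" by simp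
    thus ?thesis using qc q0 by auto
  next
    case True
    hence "(2 - \<alpha> - \<beta>) *\<^sub>R p = 0" using lin by simp
    hence "2 - \<alpha> - \<beta> = 0" using p0 by simp
    hence "\<beta> = 0" using True by simp
    hence "(p - q) * (p - q) = 0" using b by simp
    hence "norm (p - q) ^ 2 = 0" using sa_sq_norm[of "p - q"] by (simp add: cstar_diff ps qs)
    thus ?thesis by simp
  qed
qed

lemma one_dim:
  fixes dummy :: "'a::cstar_algebra"
  assumes bjp: "\<forall>a b::'a. bj_orth a b \<longrightarrow> norm (a + b) \<ge> norm b"
    and nt: "\<exists>x::'a. x \<noteq> 0"
  shows "\<exists>e::'a. e * e = e \<and> cstar e = e \<and> e \<noteq> 0 \<and> (\<forall>x::'a. \<exists>c. x = cscale c e)"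
proof -
  obtain z :: 'a where z: "z \<noteq> 0" using nt by blast
  let ?k = "cstar z * z"
  have k0: "?k \<noteq> 0" using z cstar_identity[of z] by (metis norm_eq_zero power_not_zero)
  have ksa: "cstar ?k = ?k" by (simp add: cstar_mult cstar_cstar)
  obtain c e where e: "e * e = e" "cstar e = e" "?k = c *\<^sub>R e" using sa_proj[OF bjp ksa] by blast
  have e0: "e \<noteq> 0" using e k0 by auto
  have sa_e: "\<exists>r. w = r *\<^sub>R e" if wsa: "cstar w = w" for w :: 'a
  proof (cases "w = 0")
    case True thus ?thesis by (intro exI[of _ 0]) simp
  next
    case False
    obtain r f where f: "f * f = f" "cstar f = f" "w = r *\<^sub>R f" using sa_proj[OF bjp wsa] by blast
    have "f \<noteq> 0" using f False by auto
    hence "f = e" using proj_uniq[OF bjp f(1,2) e(1,2) _ e0] by simp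
    thus ?thesis using f by blast
  qed
  have "\<exists>c. x = cscale c e" for x
  proof -
    define re where "re = (1/2) *\<^sub>R (x + cstar x)"
    define im where "im = (1/2) *\<^sub>R cscale (- \<i>) (x - cstar x)"
    have resa: "cstar re = re" unfolding re_def by (simp add: cstar_scaleR cstar_add cstar_cstar add.commute)
    have imsa: "cstar im = im" unfolding im_def
      by (simp add: cstar_scaleR cstar_cscale cstar_diff cstar_cstar cscale_diff_right cscale_minus_left)
    obtain a where a: "re = a *\<^sub>R e" using sa_e[OF resa] by blast
    obtain b where b: "im = b *\<^sub>R e" using sa_e[OF imsa] by blast
    have "re + cscale \<i> im = x"
    proof -
      have ci: "cscale \<i> im = (1/2) *\<^sub>R x - (1/2) *\<^sub>R cstar x"
        unfolding im_def by (simp add: J_scaleR cscale_cscale cscale_one scaleR_diff_right)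
      have "re + cscale \<i> im = (1/2) *\<^sub>R x + (1/2) *\<^sub>R x"
        unfolding ci re_def by (simp add: algebra_simps)
      also have "\<dots> = (1/2) *\<^sub>R (x + x)" by (simp only: scaleR_right_distrib)
      also have "\<dots> = x" by (rule scaleR_half_double)
      finally show ?thesis .
    qed
    hence "x = cscale (complex_of_real a + \<i> * complex_of_real b) e"
      unfolding a b by (simp add: scaleR_cscale cscale_cscale cscale_add_left)
    thus ?thesis by blast
  qed
  thus ?thesis using e e0 by blast
qed

lemma forward:
  assumes nontrivial: "\<exists>x::'a::cstar_algebra. x \<noteq> 0"
    and bjp: "\<forall>a b::'a. bj_orth a b \<longrightarrow> norm (a + b) \<ge> norm b"
  shows "\<exists>\<phi>::'a \<Rightarrow> complex. star_iso_to_complex \<phi>"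
proof -
  obtain e :: 'a where ee: "e * e = e" and es: "cstar e = e" and e0: "e \<noteq> 0"
    and all: "\<forall>x::'a. \<exists>c. x = cscale c e"
    using one_dim[OF bjp nontrivial] by blast
  have uniq: "c = d" if "cscale c e = cscale d e" for c d
  proof -
    have "cscale (c - d) e = 0" using that by (simp add: cscale_diff_left)
    hence "cmod (c - d) * norm e = 0" by (metis norm_cscale norm_zero)
    thus ?thesis using e0 by simp
  qed
  define \<phi> where "\<phi> x = (THE c. x = cscale c e)" for x
  have phi_c: "\<phi> (cscale c e) = c" for c
    unfolding \<phi>_def by (rule the_equality) (auto intro: uniq)
  have x_eq: "x = cscale (\<phi> x) e" for x
  proof -
    obtain c where "x = cscale c e" using all by blast
    thus ?thesis using phi_c by simp
  qed
  have "star_iso_to_complex \<phi>"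
    unfolding star_iso_to_complex_def
  proof (intro conjI allI)
    show "bij \<phi>"
    proof (rule bijI)
      show "inj \<phi>" by (rule injI) (metis x_eq)
      show "surj \<phi>" by (rule surjI[of _ "\<lambda>c. cscale c e"]) (rule phi_c)
    qed
  next
    fix x y
    have "x + y = cscale (\<phi> x + \<phi> y) e"
      by (subst x_eq[of x], subst x_eq[of y]) (simp add: cscale_add_left)
    thus "\<phi> (x + y) = \<phi> x + \<phi> y" using phi_c by metis
  next
    fix c x
    have "cscale c x = cscale (c * \<phi> x) e"
      by (subst x_eq[of x]) (simp add: cscale_cscale)
    thus "\<phi> (cscale c x) = c * \<phi> x" using phi_c by metis
  next
    fix x y
    have "x * y = cscale (\<phi> x * \<phi> y) e"
      by (subst x_eq[of x], subst x_eq[of y]) (simp add: cc_mult ee)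
    thus "\<phi> (x * y) = \<phi> x * \<phi> y" using phi_c by metis
  next
    fix x
    have "cstar x = cscale (cnj (\<phi> x)) e"
      by (subst x_eq[of x]) (simp add: cstar_cscale es)
    thus "\<phi> (cstar x) = cnj (\<phi> x)" using phi_c by metis
  qed
  thus ?thesis by blast
qed

lemma backward:
  fixes \<phi> :: "'a::cstar_algebra \<Rightarrow> complex"
  assumes iso: "star_iso_to_complex \<phi>"
  shows "\<forall>a b::'a. bj_orth a b \<longrightarrow> norm (a + b) \<ge> norm b"
proof -
  have bij: "bij \<phi>" and add: "\<And>x y. \<phi> (x + y) = \<phi> x + \<phi> y"
    and sc: "\<And>c x. \<phi> (cscale c x) = c * \<phi> x" and mu: "\<And>x y. \<phi> (x * y) = \<phi> x * \<phi> y"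
    and st: "\<And>x. \<phi> (cstar x) = cnj (\<phi> x)"
    using iso unfolding star_iso_to_complex_def by auto
  have inj: "inj \<phi>" using bij bij_is_inj by blast
  have phi0: "\<phi> 0 = 0" using add[of 0 0] by simp
  obtain e where e1: "\<phi> e = 1" using bij by (metis bij_pointE)
  have x_eq: "x = cscale (\<phi> x) e" for x
  proof -
    have "\<phi> (cscale (\<phi> x) e) = \<phi> x" using sc e1 by simp
    thus ?thesis using inj by (auto dest: injD)
  qed
  have ee: "cstar e * e = e"
  proof -
    have "\<phi> (cstar e * e) = \<phi> e" using mu st e1 by simp
    thus ?thesis using inj by (auto dest: injD)
  qed
  have e0: "e \<noteq> 0" using e1 phi0 by auto
  have ne: "norm e = 1"
  proof -
    have "norm e = (norm e)^2" using cstar_identity[of e] ee by simp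
    thus ?thesis using e0 by (simp add: power2_eq_square)
  qed
  have nx: "norm x = cmod (\<phi> x)" for x
    using x_eq[of x] ne by (metis mult.right_neutral norm_cscale)
  show ?thesis
  proof (intro allI impI)
    fix a b :: 'a
    assume orth: "bj_orth a b"
    show "norm (a + b) \<ge> norm b"
    proof (cases "\<phi> b = 0")
      case True
      hence "b = 0" using x_eq[of b] by simp
      thus ?thesis by simp
    next
      case False
      have "norm (a + cscale (- \<phi> a / \<phi> b) b) \<ge> norm a" using orth unfolding bj_orth_def by blast
      moreover have "\<phi> (a + cscale (- \<phi> a / \<phi> b) b) = 0" using False by (simp add: add sc)
      ultimately have "norm a = 0" using nx by (metis norm_ge_zero norm_zero antisym)
      thus ?thesis by simp
    qed
  qed
qed

theorem corollary4p3:
  assumes nontrivial: "\<exists>x::'a::cstar_algebra. x \<noteq> 0"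
  shows "(\<forall>a b::'a. bj_orth a b \<longrightarrow> norm (a + b) \<ge> norm b)
     \<longleftrightarrow> (\<exists>\<phi>::'a \<Rightarrow> complex. star_iso_to_complex \<phi>)"
  using forward[OF nontrivial] backward by blast

end
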